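(* There is an infinite family of graphs $G$ for which $\tau^*_2(G) \leq (\frac{3}{4}+o(1))\,\tau^*_3(G)$, where $o(1)$ tends to $0$ as the number of vertices of $G$ tends to infinity.
   Context: A triangle of a graph $G$ is a set of three pairwise adjacent vertices, identified with its three edges. For an integer $k\ge1$, a $k$-multi-transversal of $G$ is a multiset $F$ of edges such that every triangle of $G$ contains at least $k$ elements of $F$ (counted with multiplicity); $\tau^*_k(G)$ is the minimum of $|F|/k$ over all $k$-multi-transversals $F$ (equivalently, the minimum total weight of an assignment $z:E(G)\to\{0,1/k,\dots,1\}$ giving every triangle total weight at least $1$). *)

theory Defs
  imports Complex_Main
begin

definition simple_graph :: "'a set \<Rightarrow> 'a set set \<Rightarrow> bool" where
  "simple_graph V E \<longleftrightarrow> finite V \<and> (\<forall>e\<in>E. e \<subseteq> V \<and> card e = 2)"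

definition triangles :: "'a set set \<Rightarrow> 'a set set" where
  "triangles E = {{a, b, c} | a b c. a \<noteq> b \<and> b \<noteq> c \<and> a \<noteq> c \<and>
                     {a, b} \<in> E \<and> {b, c} \<in> E \<and> {a, c} \<in> E}"

definition tri_edges :: "'a set \<Rightarrow> 'a set set" where
  "tri_edges T = {e. e \<subseteq> T \<and> card e = 2}"

text \<open>A k-multi-transversal, given as a multiset of edges, i.e. a multiplicity
  function F supported on E, such that each triangle contains at least k elements.\<close>
definition multi_transversal :: "'a set set \<Rightarrow> nat \<Rightarrow> ('a set \<Rightarrow> nat) \<Rightarrow> bool" where
  "multi_transversal E k F \<longleftrightarrow> (\<forall>e. e \<notin> E \<longrightarrow> F e = 0) \<and>
     (\<forall>T\<in>triangles E. (\<Sum>e\<in>tri_edges T. F e) \<ge> k)"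

definition tau_star :: "nat \<Rightarrow> 'a set set \<Rightarrow> real" where
  "tau_star k E = real (LEAST m. \<exists>F. multi_transversal E k F \<and> (\<Sum>e\<in>E. F e) = m) / real k"

end

theory Submission
  imports Defs "HOL-Library.Nat_Bijection"
begin



lemma tri_edges3:
  assumes "a \<noteq> b" "b \<noteq> c" "a \<noteq> c"
  shows "tri_edges {a,b,c} = {{a,b},{b,c},{a,c}}"
proof -
  have "e \<in> {{a,b},{b,c},{a,c}}" if "e \<subseteq> {a,b,c}" "card e = 2" for e
  proof -
    from that(2) obtain x y where e: "e = {x,y}" "x \<noteq> y" by (auto simp: card_2_iff)
    with that(1) show ?thesis by auto
  qed
  moreover have "card {a,b} = 2" "card {b,c} = 2" "card {a,c} = 2" using assms by auto
  ultimately show ?thesis unfolding tri_edges_def by auto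
qed



locale gadget =
  fixes c :: 'a and L :: "'a set" and R :: "'a \<Rightarrow> 'a \<Rightarrow> bool" and al :: nat
  assumes finL: "finite L" and cL: "c \<notin> L"
  and RL: "\<And>x y. R x y \<Longrightarrow> x \<in> L \<and> y \<in> L"
  and Rsym: "\<And>x y. R x y \<Longrightarrow> R y x" and Rirr: "\<And>x. \<not> R x x"
  and Rtri: "\<And>x y z. R x y \<Longrightarrow> R y z \<Longrightarrow> R x z \<Longrightarrow> False"
  and Rind: "\<And>I. I \<subseteq> L \<Longrightarrow> (\<forall>x\<in>I. \<forall>y\<in>I. \<not> R x y) \<Longrightarrow> card I \<le> al"
begin

definition spokes where "spokes = {{c,x} | x. x \<in> L}"
definition redges where "redges = {{x,y} | x y. R x y}"
definition EE where "EE = spokes \<union> redges"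
definition eset where "eset S = {{x,y} | x y. x \<in> S \<and> y \<in> S \<and> R x y}"

lemma c_ne: "x \<in> L \<Longrightarrow> c \<noteq> x" using cL by auto

lemma simple: "simple_graph (insert c L) EE"
  unfolding simple_graph_def EE_def spokes_def redges_def
  using finL cL RL Rirr by (auto simp: card_2_iff) (metis Rirr)+

lemma finite_EE: "finite EE"
proof -
  have "spokes = (\<lambda>x. {c,x}) ` L" unfolding spokes_def by auto
  moreover have "redges \<subseteq> (\<lambda>(x,y). {x,y}) ` (L \<times> L)" unfolding redges_def using RL by auto
  ultimately show ?thesis unfolding EE_def using finL by (auto intro: finite_subset)
qed

lemma edge_cases:
  assumes "{u,v} \<in> EE" "u \<noteq> v"
  shows "(u = c \<and> v \<in> L) \<or> (v = c \<and> u \<in> L) \<or> R u v"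
  using assms unfolding EE_def spokes_def redges_def
  by (auto simp: doubleton_eq_iff dest: Rsym)

lemma triangles_EE: "triangles EE = {{c,x,y} | x y. R x y}"
proof
  show "triangles EE \<subseteq> {{c,x,y} | x y. R x y}"
  proof
    fix T assume "T \<in> triangles EE"
    then obtain a b d where T: "T = {a,b,d}" "a \<noteq> b" "b \<noteq> d" "a \<noteq> d"
      "{a,b} \<in> EE" "{b,d} \<in> EE" "{a,d} \<in> EE" unfolding triangles_def by blast
    have e1: "(a = c \<and> b \<in> L) \<or> (b = c \<and> a \<in> L) \<or> R a b" using edge_cases T by blast
    have e2: "(b = c \<and> d \<in> L) \<or> (d = c \<and> b \<in> L) \<or> R b d" using edge_cases T by blast
    have e3: "(a = c \<and> d \<in> L) \<or> (d = c \<and> a \<in> L) \<or> R a d" using edge_cases T by blast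
    show "T \<in> {{c,x,y} | x y. R x y}"
    proof (cases "a = c")
      case True
      then have "R b d" using e2 T by auto
      then show ?thesis using T True by auto
    next
      case a: False
      show ?thesis
      proof (cases "b = c")
        case True
        then have "R a d" using e3 T a by auto
        then show ?thesis using T True by auto
      next
        case b: False
        show ?thesis
        proof (cases "d = c")
          case True
          then have "R a b" using e1 T a b by auto
          then show ?thesis using T True by auto
        next
          case False
          then have "R a b" "R b d" "R a d" using e1 e2 e3 a b by auto
          then show ?thesis using Rtri by blast
        qed
      qed
    qed
  qed
next
  show "{{c,x,y} | x y. R x y} \<subseteq> triangles EE"
  proof
    fix T assume "T \<in> {{c,x,y} | x y. R x y}"
    then obtain x y where T: "T = {c,x,y}" "R x y" by blast
    then have "x \<in> L" "y \<in> L" "x \<noteq> y" using RL Rirr by auto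
    then have "c \<noteq> x" "c \<noteq> y" using cL by auto
    moreover have "{c,x} \<in> EE" "{c,y} \<in> EE" "{x,y} \<in> EE"
      unfolding EE_def spokes_def redges_def using \<open>x \<in> L\<close> \<open>y \<in> L\<close> T by auto
    ultimately show "T \<in> triangles EE" unfolding triangles_def using T \<open>x \<noteq> y\<close> by blast
  qed
qed

lemma spokes_redges_disj: "spokes \<inter> redges = {}"
  unfolding spokes_def redges_def using RL cL by (auto simp: doubleton_eq_iff)

lemma card_spokes: "card spokes = card L"
proof -
  have "spokes = (\<lambda>x. {c,x}) ` L" unfolding spokes_def by auto
  moreover have "inj_on (\<lambda>x. {c,x}) L" using cL by (auto simp: inj_on_def doubleton_eq_iff)
  ultimately show ?thesis by (simp add: card_image)
qed

end


context gadget begin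

lemma finite_eset: "finite S \<Longrightarrow> finite (eset S)"
proof -
  assume "finite S"
  have "eset S \<subseteq> (\<lambda>(x,y). {x,y}) ` (S \<times> S)" unfolding eset_def by auto
  then show ?thesis using \<open>finite S\<close> by (auto intro: finite_subset)
qed

lemma graph_lemma:
  "finite S \<Longrightarrow> \<exists>I\<subseteq>S. (\<forall>x\<in>I. \<forall>y\<in>I. \<not> R x y) \<and> 2*card S \<le> card (eset S) + 4*card I"
proof (induction "card S" arbitrary: S rule: less_induct)
  case less
  show ?case
  proof (cases "S = {}")
    case True then show ?thesis by auto
  next
    case False
    then obtain v where v: "v \<in> S" by auto
    define N where "N = {u\<in>S. R v u}"
    have finN: "finite N" using less.prems N_def by auto
    show ?thesis
    proof (cases "card N \<ge> 2")
      case True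
      define S' where "S' = S - {v}"
      have "card S > 0" using v less.prems by (auto simp: card_gt_0_iff)
      then have cS': "card S' < card S" "card S = card S' + 1" using v less.prems S'_def
        by (auto simp: card_Diff_singleton)
      obtain I where I: "I \<subseteq> S'" "\<forall>x\<in>I. \<forall>y\<in>I. \<not> R x y"
        "2*card S' \<le> card (eset S') + 4*card I"
        using less.hyps[OF cS'(1)] less.prems S'_def by auto
      have sub: "eset S' \<union> (\<lambda>u. {v,u}) ` N \<subseteq> eset S"
        unfolding eset_def N_def S'_def using v by auto
      have disj: "eset S' \<inter> (\<lambda>u. {v,u}) ` N = {}"
      proof (rule ccontr)
        assume "eset S' \<inter> (\<lambda>u. {v,u}) ` N \<noteq> {}"
        then obtain x y u where "{x,y} = {v,u}" "x \<in> S'" "y \<in> S'" unfolding eset_def by blast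
        then have "v \<in> S'" by (metis insertI1 insert_commute doubleton_eq_iff)
        then show False unfolding S'_def by blast
      qed
      have inj: "inj_on (\<lambda>u. {v,u}) N" by (auto simp: inj_on_def doubleton_eq_iff)
      have "card (eset S') + card N = card (eset S' \<union> (\<lambda>u. {v,u}) ` N)"
        using disj inj finN finite_eset[of S'] less.prems S'_def
        by (simp add: card_Un_disjoint card_image)
      also have "\<dots> \<le> card (eset S)" using sub finite_eset[OF less.prems] by (rule card_mono[rotated])
      finally show ?thesis using I True cS' S'_def by (intro exI[of _ I]) auto
    next
      case False
      define S' where "S' = S - insert v N"
      have "card (insert v N) \<le> 2" using False finN by (simp add: card_insert_le_m1)
      moreover have "insert v N \<subseteq> S" using v N_def by auto
      ultimately have cS': "card S' < card S" "card S \<le> card S' + 2"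
      proof -
        assume a: "card (insert v N) \<le> 2" "insert v N \<subseteq> S"
        have "card S' = card S - card (insert v N)" unfolding S'_def
          using a(2) less.prems finN by (simp add: card_Diff_subset)
        moreover have "card (insert v N) \<ge> 1" using finN by (simp add: Suc_le_eq card_gt_0_iff)
        moreover have "card (insert v N) \<le> card S" using a(2) less.prems by (rule card_mono[rotated])
        ultimately show "card S' < card S" "card S \<le> card S' + 2" using a(1) by linarith+
      qed
      obtain I where I: "I \<subseteq> S'" "\<forall>x\<in>I. \<forall>y\<in>I. \<not> R x y"
        "2*card S' \<le> card (eset S') + 4*card I"
        using less.hyps[OF cS'(1)] less.prems S'_def by auto
      have vI: "v \<notin> I" using I S'_def by auto
      have ind: "\<forall>x\<in>insert v I. \<forall>y\<in>insert v I. \<not> R x y"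
      proof (intro ballI)
        fix x y assume xy: "x \<in> insert v I" "y \<in> insert v I"
        have nv: "\<not> R v z" if "z \<in> I" for z using that I(1) unfolding S'_def N_def by auto
        show "\<not> R x y"
        proof (cases "x = v")
          case True then show ?thesis using xy nv Rirr by auto
        next
          case False
          then have "x \<in> I" using xy by auto
          then show ?thesis using xy nv I(2) Rsym by blast
        qed
      qed
      have "card (eset S') \<le> card (eset S)"
        using finite_eset[OF less.prems] by (rule card_mono) (auto simp: eset_def S'_def)
      moreover have "card (insert v I) = card I + 1" using vI I less.prems S'_def
        by (simp add: finite_subset)
      ultimately show ?thesis using I cS' ind v S'_def by (intro exI[of _ "insert v I"]) auto
    qed
  qed
qed

end


context gadget begin

lemma tri_edges_cxy:
  assumes "R x y" shows "tri_edges {c,x,y} = {{c,x},{x,y},{c,y}}"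
    "{c,x} \<noteq> {x,y}" "{c,x} \<noteq> {c,y}" "{x,y} \<noteq> {c,y}"
proof -
  have "x \<in> L" "y \<in> L" "x \<noteq> y" using RL Rirr assms by auto
  then have d: "c \<noteq> x" "c \<noteq> y" "x \<noteq> y" using cL by auto
  then show "tri_edges {c,x,y} = {{c,x},{x,y},{c,y}}" using tri_edges3[of c x y] by simp
  show "{c,x} \<noteq> {x,y}" "{c,x} \<noteq> {c,y}" "{x,y} \<noteq> {c,y}" using d by (auto simp: doubleton_eq_iff)
qed

lemma tau2_bound: "tau_star 2 EE \<le> real (card L) / 2"
proof -
  define F where "F e = (if e \<in> spokes then 1 else (0::nat))" for e
  have mt: "multi_transversal EE 2 F"
    unfolding multi_transversal_def
  proof (intro conjI allI impI ballI)
    fix e assume "e \<notin> EE" then show "F e = 0" unfolding F_def EE_def by auto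
  next
    fix T assume "T \<in> triangles EE"
    then obtain x y where T: "T = {c,x,y}" "R x y" using triangles_EE by auto
    have xL: "x \<in> L" "y \<in> L" using RL T by auto
    have "{x,y} \<notin> spokes" using spokes_redges_disj T unfolding redges_def by auto
    moreover have "{c,x} \<in> spokes" "{c,y} \<in> spokes" using xL unfolding spokes_def by auto
    ultimately show "2 \<le> (\<Sum>e\<in>tri_edges T. F e)" using tri_edges_cxy[OF T(2)] T
      by (simp add: F_def)
  qed
  have "(\<Sum>e\<in>EE. F e) = card (EE \<inter> spokes)" unfolding F_def
    using finite_EE by (simp add: sum.If_cases)
  also have "EE \<inter> spokes = spokes" unfolding EE_def by auto
  finally have s: "(\<Sum>e\<in>EE. F e) = card L" using card_spokes by simp
  have "(LEAST m. \<exists>F. multi_transversal EE 2 F \<and> (\<Sum>e\<in>EE. F e) = m) \<le> card L"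
    using mt s by (intro Least_le) blast
  then show ?thesis unfolding tau_star_def by (simp add: divide_right_mono)
qed

lemma tau3_sum_bound:
  assumes mt: "multi_transversal EE 3 F"
  shows "2 * card L \<le> (\<Sum>e\<in>EE. F e) + 4 * al"
proof -
  have cov: "3 \<le> F {c,x} + F {x,y} + F {c,y}" if "R x y" for x y
  proof -
    have "{c,x,y} \<in> triangles EE" using triangles_EE that by auto
    then have "3 \<le> (\<Sum>e\<in>tri_edges {c,x,y}. F e)" using mt unfolding multi_transversal_def by auto
    then show ?thesis using tri_edges_cxy[OF that] by simp
  qed
  define S where "S = {x\<in>L. F {c,x} \<le> 1}"
  have finS: "finite S" "S \<subseteq> L" using finL S_def by auto
  obtain I where I: "I \<subseteq> S" "\<forall>x\<in>I. \<forall>y\<in>I. \<not> R x y" "2*card S \<le> card (eset S) + 4*card I"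
    using graph_lemma[OF finS(1)] by blast
  have cI: "card I \<le> al" using Rind I finS by auto
  have finR: "finite redges" "finite spokes" using finite_EE unfolding EE_def by auto
  have sumEE: "(\<Sum>e\<in>EE. F e) = (\<Sum>e\<in>spokes. F e) + (\<Sum>e\<in>redges. F e)"
    unfolding EE_def using finR spokes_redges_disj by (simp add: sum.union_disjoint)
  have "spokes = (\<lambda>x. {c,x}) ` L" unfolding spokes_def by auto
  moreover have "inj_on (\<lambda>x. {c,x}) L" using cL by (auto simp: inj_on_def doubleton_eq_iff)
  ultimately have sp: "(\<Sum>e\<in>spokes. F e) = (\<Sum>x\<in>L. F {c,x})" by (simp add: sum.reindex)
  have "(\<Sum>x\<in>L. F {c,x}) \<ge> (\<Sum>x\<in>L - S. F {c,x})"
    using finL by (intro sum_mono2) auto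
  moreover have "(\<Sum>x\<in>L - S. F {c,x}) \<ge> (\<Sum>x\<in>L - S. 2)"
    by (intro sum_mono) (auto simp: S_def)
  ultimately have A: "(\<Sum>x\<in>L. F {c,x}) \<ge> 2 * card (L - S)" by simp
  have "eset S \<subseteq> redges" unfolding eset_def redges_def by auto
  then have "(\<Sum>e\<in>redges. F e) \<ge> (\<Sum>e\<in>eset S. F e)" using finR by (intro sum_mono2) auto
  moreover have "(\<Sum>e\<in>eset S. F e) \<ge> (\<Sum>e\<in>eset S. 1)"
  proof (intro sum_mono)
    fix e assume "e \<in> eset S"
    then obtain x y where e: "e = {x,y}" "x \<in> S" "y \<in> S" "R x y" unfolding eset_def by auto
    have "{c,y} = {y,c}" by auto
    then show "1 \<le> F e" using cov[OF e(4)] e S_def by auto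
  qed
  ultimately have B: "(\<Sum>e\<in>redges. F e) \<ge> card (eset S)" by simp
  have "card L = card (L - S) + card S" using finS finL
    by (metis add.commute card_Diff_subset card_mono le_add_diff_inverse2)
  then show ?thesis using A B I(3) cI sumEE sp by linarith
qed

lemma tau3_bound: "real (2 * card L) - 4 * al \<le> 3 * tau_star 3 EE"
proof -
  let ?P = "\<lambda>m. \<exists>F. multi_transversal EE 3 F \<and> (\<Sum>e\<in>EE. F e) = m"
  have "?P (\<Sum>e\<in>EE. (\<lambda>_. 3::nat) e)"
  proof (intro exI conjI)
    show "multi_transversal EE 3 (\<lambda>e. if e \<in> EE then 3::nat else 0)"
      unfolding multi_transversal_def
    proof (intro conjI allI impI ballI)
      fix T assume "T \<in> triangles EE"
      then obtain x y where T: "T = {c,x,y}" "R x y" using triangles_EE by auto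
      have "{c,x} \<in> EE" "{c,y} \<in> EE" "{x,y} \<in> EE" using RL T unfolding EE_def spokes_def redges_def by auto
      then show "3 \<le> (\<Sum>e\<in>tri_edges T. if e \<in> EE then 3::nat else 0)" using tri_edges_cxy[OF T(2)] T by simp
    qed simp
  qed simp
  then have "?P (LEAST m. ?P m)" by (rule LeastI)
  then obtain F where F: "multi_transversal EE 3 F" "(\<Sum>e\<in>EE. F e) = (LEAST m. ?P m)" by blast
  have "2 * card L \<le> (LEAST m. ?P m) + 4 * al" using tau3_sum_bound[OF F(1)] F(2) by simp
  then show ?thesis unfolding tau_star_def by simp
qed

end


definition indep :: "(nat \<Rightarrow> nat \<Rightarrow> bool) \<Rightarrow> nat set \<Rightarrow> bool" where
  "indep a I = (\<forall>x\<in>I. \<forall>y\<in>I. \<not> a x y)"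
definition cnt :: "nat set list \<Rightarrow> nat \<Rightarrow> nat" where
  "cnt l v = length (filter (\<lambda>I. v \<in> I) l)"
definition nbr :: "(nat \<Rightarrow> nat \<Rightarrow> bool) \<Rightarrow> nat \<Rightarrow> nat set \<Rightarrow> nat set" where
  "nbr a n A = {v. v < n \<and> (\<exists>x\<in>A. a x v)}"

definition minv :: "nat \<Rightarrow> (nat \<Rightarrow> nat \<Rightarrow> bool) \<Rightarrow> (nat \<Rightarrow> nat) \<Rightarrow> nat \<Rightarrow> nat set list \<Rightarrow> nat \<Rightarrow> bool" where
  "minv n a w D l T \<longleftrightarrow> 1 \<le> n \<and>
     (\<forall>x y. a x y \<longrightarrow> x < n \<and> y < n \<and> a y x \<and> x \<noteq> y) \<and>
     (\<forall>x y z. \<not> (a x y \<and> a y z \<and> a x z)) \<and>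
     (\<forall>I. I \<subseteq> {..<n} \<longrightarrow> indep a I \<longrightarrow> sum w I \<le> D) \<and>
     (\<forall>I\<in>set l. I \<subseteq> {..<n} \<and> indep a I) \<and>
     (\<forall>v<n. cnt l v = T) \<and>
     sum w {..<n} * T = length l * D \<and>
     1 \<le> T \<and> T \<le> length l \<and> 1 \<le> D"

lemma invD: assumes h0: "minv n a w D l T"
  shows "1 \<le> n" "\<And>x y. a x y \<Longrightarrow> x < n \<and> y < n \<and> a y x \<and> x \<noteq> y"
    "\<And>x y z. a x y \<Longrightarrow> a y z \<Longrightarrow> a x z \<Longrightarrow> False"
    "\<And>I. I \<subseteq> {..<n} \<Longrightarrow> indep a I \<Longrightarrow> sum w I \<le> D"
    "\<And>I. I \<in> set l \<Longrightarrow> I \<subseteq> {..<n} \<and> indep a I"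
    "\<And>v. v < n \<Longrightarrow> cnt l v = T"
    "sum w {..<n} * T = length l * D" "1 \<le> T" "T \<le> length l" "1 \<le> D"
proof -
  note h = h0[unfolded minv_def]
  show "1 \<le> n" by (rule h[THEN conjunct1])
  show "\<And>x y. a x y \<Longrightarrow> x < n \<and> y < n \<and> a y x \<and> x \<noteq> y" by (rule h[THEN conjunct2, THEN conjunct1, rule_format])
  show "\<And>x y z. a x y \<Longrightarrow> a y z \<Longrightarrow> a x z \<Longrightarrow> False" using h[THEN conjunct2, THEN conjunct2, THEN conjunct1, rule_format] by blast
  show "\<And>I. I \<subseteq> {..<n} \<Longrightarrow> indep a I \<Longrightarrow> sum w I \<le> D" by (rule h[THEN conjunct2, THEN conjunct2, THEN conjunct2, THEN conjunct1, rule_format])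
  show "\<And>I. I \<in> set l \<Longrightarrow> I \<subseteq> {..<n} \<and> indep a I" by (rule h[THEN conjunct2, THEN conjunct2, THEN conjunct2, THEN conjunct2, THEN conjunct1, rule_format])
  show "\<And>v. v < n \<Longrightarrow> cnt l v = T" by (rule h[THEN conjunct2, THEN conjunct2, THEN conjunct2, THEN conjunct2, THEN conjunct2, THEN conjunct1, rule_format])
  show "sum w {..<n} * T = length l * D" by (rule h[THEN conjunct2, THEN conjunct2, THEN conjunct2, THEN conjunct2, THEN conjunct2, THEN conjunct2, THEN conjunct1])
  show "1 \<le> T" by (rule h[THEN conjunct2, THEN conjunct2, THEN conjunct2, THEN conjunct2, THEN conjunct2, THEN conjunct2, THEN conjunct2, THEN conjunct1])
  show "T \<le> length l" by (rule h[THEN conjunct2, THEN conjunct2, THEN conjunct2, THEN conjunct2, THEN conjunct2, THEN conjunct2, THEN conjunct2, THEN conjunct2, THEN conjunct1])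
  show "1 \<le> D" by (rule h[THEN conjunct2, THEN conjunct2, THEN conjunct2, THEN conjunct2, THEN conjunct2, THEN conjunct2, THEN conjunct2, THEN conjunct2, THEN conjunct2])
qed

lemma sum_list_exchange:
  "finite X \<Longrightarrow> sum_list (map (\<lambda>I. sum w (X \<inter> I)) l) = (\<Sum>v\<in>X. w v * cnt l v)"
proof (induction l)
  case Nil then show ?case by (simp add: cnt_def)
next
  case (Cons I l)
  have "sum w (X \<inter> I) = (\<Sum>v\<in>X. if v \<in> I then w v else 0)"
    using Cons.prems by (rule sum.inter_restrict)
  then show ?case using Cons by (auto simp: cnt_def sum.distrib[symmetric] intro!: sum.cong)
qed

lemma sum_list_split:
  "finite X \<Longrightarrow> sum_list (map (\<lambda>I. sum w (X \<inter> I) + sum w (X - I)) l) = length l * sum w X"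
proof (induction l)
  case Nil then show ?case by simp
next
  case (Cons I l)
  have "sum w (X \<inter> I) + sum w (X - I) = sum w X"
    using Cons.prems by (metis add.commute sum.Int_Diff)
  then show ?case using Cons by simp
qed

lemma sum_list_mono_const:
  "(\<And>I. I \<in> set l \<Longrightarrow> f I \<le> (D::nat)) \<Longrightarrow> sum_list (map f l) \<le> length l * D"
  by (induction l) (auto simp: add_mono)

lemma P2:
  assumes minv: "minv n a w D l T" and A: "A \<subseteq> {..<n}" "indep a A"
  shows "(length l - T) * sum w A \<le> T * sum w (nbr a n A)"
proof -
  let ?N = "nbr a n A" and ?U = "{..<n::nat}" and ?m = "length l" and ?W = "sum w {..<n}"
  have sym: "\<And>x y. a x y \<Longrightarrow> a y x \<and> x < n \<and> y < n" using invD(2)[OF minv] by blast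
  have AN: "A \<inter> ?N = {}" using A unfolding nbr_def indep_def by blast
  have NU: "?N \<subseteq> ?U" unfolding nbr_def by auto
  have each: "sum w ((?U - ?N) \<inter> I) + sum w (A - I) \<le> D" if I: "I \<in> set l" for I
  proof -
    have Iu: "I \<subseteq> ?U" "indep a I" using invD(5)[OF minv I] by auto
    let ?J = "(I - ?N) \<union> (A - I)"
    have "?J \<subseteq> ?U" using Iu A by auto
    moreover have "indep a ?J" unfolding indep_def
    proof (intro ballI notI)
      fix x y assume xy: "x \<in> ?J" "y \<in> ?J" "a x y"
      show False
      proof (cases "x \<in> A")
        case xA: True
        show False
        proof (cases "y \<in> A")
          case True then show False using A xA xy unfolding indep_def by blast
        next
          case False
          then have "y \<in> I - ?N" using xy by auto
          moreover have "y \<in> ?N" using xA xy sym unfolding nbr_def by blast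
          ultimately show False by blast
        qed
      next
        case xA: False
        then have xI: "x \<in> I - ?N" using xy by auto
        show False
        proof (cases "y \<in> A")
          case True
          then have "x \<in> ?N" using xy sym unfolding nbr_def by blast
          then show False using xI by blast
        next
          case False
          then have "y \<in> I" using xy by auto
          then show False using Iu xI xy unfolding indep_def by blast
        qed
      qed
    qed
    ultimately have "sum w ?J \<le> D" using invD(4)[OF minv] by blast
    moreover have "sum w ?J = sum w (I - ?N) + sum w (A - I)"
    proof (rule sum.union_disjoint)
      show "finite (I - ?N)" using Iu(1) finite_subset by blast
      show "finite (A - I)" using A(1) finite_subset by blast
    qed blast
    moreover have "(?U - ?N) \<inter> I = I - ?N" using Iu by auto
    ultimately show ?thesis by simp
  qed
  have "sum_list (map (\<lambda>I. sum w ((?U - ?N) \<inter> I) + sum w (A - I)) l) \<le> ?m * D"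
    using each by (rule sum_list_mono_const)
  also have "sum_list (map (\<lambda>I. sum w ((?U - ?N) \<inter> I) + sum w (A - I)) l)
      = sum_list (map (\<lambda>I. sum w ((?U - ?N) \<inter> I)) l) + sum_list (map (\<lambda>I. sum w (A - I)) l)"
    by (simp add: sum_list_addf)
  finally have ineq: "sum_list (map (\<lambda>I. sum w ((?U - ?N) \<inter> I)) l) + sum_list (map (\<lambda>I. sum w (A - I)) l) \<le> ?m * D" .
  have cntT: "\<And>v. v < n \<Longrightarrow> cnt l v = T" using invD(6)[OF minv] by blast
  have "sum_list (map (\<lambda>I. sum w ((?U - ?N) \<inter> I)) l) = (\<Sum>v\<in>?U - ?N. w v * cnt l v)"
    by (rule sum_list_exchange) simp
  also have "\<dots> = (\<Sum>v\<in>?U - ?N. w v * T)" by (intro sum.cong) (auto simp: cntT)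
  also have "\<dots> = T * sum w (?U - ?N)" by (simp add: sum_distrib_left mult.commute)
  finally have s1: "sum_list (map (\<lambda>I. sum w ((?U - ?N) \<inter> I)) l) = T * sum w (?U - ?N)" .
  have finA: "finite A" using A finite_subset by blast
  have "sum_list (map (\<lambda>I. sum w (A \<inter> I)) l) = (\<Sum>v\<in>A. w v * cnt l v)"
    using finA by (rule sum_list_exchange)
  also have "\<dots> = (\<Sum>v\<in>A. w v * T)" using A by (intro sum.cong) (auto simp: cntT)
  also have "\<dots> = T * sum w A" by (simp add: sum_distrib_left mult.commute)
  finally have s2: "sum_list (map (\<lambda>I. sum w (A \<inter> I)) l) = T * sum w A" .
  have s3: "sum_list (map (\<lambda>I. sum w (A \<inter> I)) l) + sum_list (map (\<lambda>I. sum w (A - I)) l) = ?m * sum w A"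
    using sum_list_split[OF finA, of w l] by (simp add: sum_list_addf)
  have s4: "sum w ?U = sum w (?U - ?N) + sum w ?N"
    using NU by (metis add.commute finite_lessThan sum.subset_diff)
  have WT: "?W * T = ?m * D" using invD(7)[OF minv] .
  have Tm: "T \<le> ?m" using invD(9)[OF minv] .
  have e1: "?m * sum w A = T * sum w A + (?m - T) * sum w A" using Tm
    by (metis add_mult_distrib le_add_diff_inverse)
  have e2: "T * sum w ?U = T * sum w (?U - ?N) + T * sum w ?N" using s4 by (simp add: algebra_simps)
  have "T * sum w ?U = ?m * D" using WT by (simp add: mult.commute)
  then show ?thesis using ineq s1 s2 s3 e1 e2 by linarith
qed



definition madj :: "nat \<Rightarrow> (nat \<Rightarrow> nat \<Rightarrow> bool) \<Rightarrow> nat \<Rightarrow> nat \<Rightarrow> bool" where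
  "madj n a x y \<longleftrightarrow> (x < n \<and> y < n \<and> a x y) \<or> (x < n \<and> n \<le> y \<and> y < 2*n \<and> a x (y-n)) \<or>
     (n \<le> x \<and> x < 2*n \<and> y < n \<and> a (x-n) y) \<or> (n \<le> x \<and> x < 2*n \<and> y = 2*n) \<or>
     (x = 2*n \<and> n \<le> y \<and> y < 2*n)"

definition mw :: "nat \<Rightarrow> (nat \<Rightarrow> nat) \<Rightarrow> nat \<Rightarrow> nat \<Rightarrow> nat \<Rightarrow> nat \<Rightarrow> nat" where
  "mw n w D m T x = (if x < n then (m-T) * w x else if x < 2*n then T * w (x-n) else T * D)"

definition mcs :: "nat \<Rightarrow> nat set list \<Rightarrow> nat \<Rightarrow> nat \<Rightarrow> nat set list" where
  "mcs n l m T = concat (replicate (m-T) (map (\<lambda>I. I \<union> (\<lambda>i. i+n) ` I) l)) @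
     concat (replicate T (map (insert (2*n)) l)) @ replicate (T*T) {n..<2*n}"

lemma split3: "{..<2*n+1} = {..<n} \<union> (\<lambda>i. i+n) ` {..<n} \<union> {2*n::nat}"
proof -
  have "x \<in> (\<lambda>i. i+n) ` {..<n}" if "n \<le> x" "x < 2*n" for x
    using that by (intro image_eqI[of _ _ "x-n"]) auto
  then show ?thesis by (auto simp: not_less) (meson less_Suc_eq not_le)
qed

lemma sum_split3: "sum f {..<2*n+1} = sum f {..<n} + (\<Sum>i<n. f (i+n)) + f (2*n::nat)"
proof -
  have "sum f {..<2*n+1} = sum f ({..<n} \<union> (\<lambda>i. i+n) ` {..<n}) + f (2*n)"
    unfolding split3 by (subst sum.union_disjoint) auto
  also have "sum f ({..<n} \<union> (\<lambda>i. i+n) ` {..<n}) = sum f {..<n} + sum f ((\<lambda>i. i+n) ` {..<n})"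
    by (rule sum.union_disjoint) auto
  also have "sum f ((\<lambda>i. i+n) ` {..<n}) = (\<Sum>i<n. f (i+n))" by (subst sum.reindex) auto
  finally show ?thesis .
qed

lemma sum_split3_sub:
  assumes "I \<subseteq> {..<2*n+1}"
  shows "sum f I = sum f (I \<inter> {..<n}) + (\<Sum>i\<in>{i. i<n \<and> i+n \<in> I}. f (i+n)) + (if 2*n \<in> I then f (2*n::nat) else 0)"
proof -
  let ?B = "{i. i<n \<and> i+n \<in> I}"
  have I: "I = (I \<inter> {..<n}) \<union> (\<lambda>i. i+n) ` ?B \<union> (I \<inter> {2*n})"
    using assms split3[of n] by auto
  have fin: "finite (I \<inter> {..<n})" "finite ((\<lambda>i. i+n) ` ?B)" "finite (I \<inter> {2*n})" by auto
  have "sum f I = sum f (I \<inter> {..<n}) + sum f ((\<lambda>i. i+n) ` ?B) + sum f (I \<inter> {2*n})"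
    apply (subst I)
    apply (subst sum.union_disjoint)
    using fin apply auto[3]
    apply (subst sum.union_disjoint)
    using fin apply auto
    done
  moreover have "sum f ((\<lambda>i. i+n) ` ?B) = (\<Sum>i\<in>?B. f (i+n))" by (subst sum.reindex) auto
  moreover have "sum f (I \<inter> {2*n}) = (if 2*n \<in> I then f (2*n) else 0)" by auto
  ultimately show ?thesis by simp
qed

lemma cnt_append[simp]: "cnt (xs @ ys) v = cnt xs v + cnt ys v"
  by (simp add: cnt_def)
lemma cnt_concat_replicate[simp]: "cnt (concat (replicate k xs)) v = k * cnt xs v"
  by (induction k) (auto simp: cnt_def)
lemma cnt_replicate[simp]: "cnt (replicate k S) v = (if v \<in> S then k else 0)"
  by (induction k) (auto simp: cnt_def)
lemma cnt_map: "cnt (map f l) v = length (filter (\<lambda>I. v \<in> f I) l)"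
  by (simp add: cnt_def filter_map comp_def)
lemma length_mcs: "length (mcs n l m T) = (m - T) * length l + T * length l + T*T"
  by (simp add: mcs_def length_concat sum_list_replicate)



lemma myc_adj:
  assumes inv: "minv n a w D l T" and m: "madj n a x y"
  shows "x < 2*n+1 \<and> y < 2*n+1 \<and> madj n a y x \<and> x \<noteq> y"
proof -
  have H: "\<And>u v. a u v \<Longrightarrow> u<n \<and> v<n \<and> a v u \<and> u\<noteq>v" using invD(2)[OF inv] .
  show ?thesis using m H[of x y] H[of x "y-n"] H[of "x-n" y] unfolding madj_def
    by auto
qed

lemma myc_tri:
  assumes inv: "minv n a w D l T"
  shows "madj n a x y \<Longrightarrow> madj n a y z \<Longrightarrow> madj n a x z \<Longrightarrow> False"
proof -
  have H: "\<And>u v. a u v \<Longrightarrow> u<n \<and> v<n" using invD(2)[OF inv] by blast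
  have Tr: "\<And>u v t. a u v \<Longrightarrow> a v t \<Longrightarrow> a u t \<Longrightarrow> False" using invD(3)[OF inv] by blast
  show "madj n a x y \<Longrightarrow> madj n a y z \<Longrightarrow> madj n a x z \<Longrightarrow> False"
    unfolding madj_def
    by (elim disjE; auto dest: H Tr)
qed


lemma myc_clique:
  assumes inv: "minv n a w D l T" and I: "I \<subseteq> {..<2*n+1}" "indep (madj n a) I"
  shows "sum (mw n w D (length l) T) I \<le> length l * D"
proof -
  let ?m = "length l" let ?f = "mw n w D (length l) T"
  let ?A = "I \<inter> {..<n}" let ?B = "{i. i<n \<and> i+n \<in> I}" let ?N = "nbr a n (I \<inter> {..<n})"
  have s: "sum ?f I = sum ?f ?A + (\<Sum>i\<in>?B. ?f (i+n)) + (if 2*n \<in> I then ?f (2*n) else 0)"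
    using I(1) by (rule sum_split3_sub)
  have sA: "sum ?f ?A = (?m-T) * sum w ?A" by (simp add: mw_def sum_distrib_left)
  have sB: "(\<Sum>i\<in>?B. ?f (i+n)) = T * sum w ?B"
    by (simp add: mw_def sum_distrib_left)
  have s2: "?f (2*n) = T*D" by (simp add: mw_def)
  have indA: "indep a ?A" using I(2) unfolding indep_def madj_def by blast
  have Tm: "T \<le> ?m" using invD(9)[OF inv] .
  have WT: "sum w {..<n} * T = ?m * D" using invD(7)[OF inv] .
  have wA: "sum w ?A \<le> D" using invD(4)[OF inv, of ?A] indA by auto
  show ?thesis
  proof (cases "2*n \<in> I")
    case True
    have "?B = {}"
    proof -
      have "\<not> (i<n \<and> i+n \<in> I)" for i
        using I(2) True unfolding indep_def madj_def by force
      then show ?thesis by auto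
    qed
    then have z: "(\<Sum>i\<in>?B. ?f (i+n)) = 0" by (simp only: sum.empty)
    have "sum ?f I = (?m-T) * sum w ?A + T*D" using s sA s2 True unfolding z by simp
    also have "\<dots> \<le> (?m-T) * D + T*D" using wA by simp
    also have "\<dots> = ?m * D" using Tm by (simp add: diff_mult_distrib)
    finally show ?thesis .
  next
    case False
    have P: "(?m - T) * sum w ?A \<le> T * sum w ?N" using P2[OF inv _ indA] by auto
    have disj: "?B \<inter> ?N = {}"
    proof -
      have "\<not> (i \<in> ?B \<and> i \<in> ?N)" for i
      proof
        assume h: "i \<in> ?B \<and> i \<in> ?N"
        then obtain x where "x \<in> ?A" "a x i" unfolding nbr_def by auto
        moreover have "madj n a x (i+n)" using calculation h unfolding madj_def by auto
        ultimately show False using I(2) h unfolding indep_def by auto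
      qed
      then show ?thesis by blast
    qed
    have "sum w ?B + sum w ?N = sum w (?B \<union> ?N)"
      using disj by (simp add: sum.union_disjoint nbr_def)
    also have "\<dots> \<le> sum w {..<n}" by (intro sum_mono2) (auto simp: nbr_def)
    finally have BN: "sum w ?B + sum w ?N \<le> sum w {..<n}" .
    have "sum ?f I = (?m-T) * sum w ?A + T * sum w ?B" using s sA sB False by simp
    also have "\<dots> \<le> T * sum w ?N + T * sum w ?B" using P by simp
    also have "\<dots> = T * (sum w ?B + sum w ?N)" by (simp add: algebra_simps)
    also have "\<dots> \<le> T * sum w {..<n}" using BN by simp
    also have "\<dots> = ?m * D" using WT by (simp add: mult.commute)
    finally show ?thesis .
  qed
qed

lemma mcs_cases:
  "I \<in> set (mcs n l m T) \<Longrightarrow> (\<exists>J\<in>set l. I = J \<union> (\<lambda>i. i+n) ` J) \<or> (\<exists>J\<in>set l. I = insert (2*n) J) \<or> I = {n..<2*n}"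
  unfolding mcs_def by (auto split: if_splits)

lemma myc_cs:
  assumes inv: "minv n a w D l T" and I: "I \<in> set (mcs n l m T)"
  shows "I \<subseteq> {..<2*n+1} \<and> indep (madj n a) I"
proof -
  have J: "\<And>J. J \<in> set l \<Longrightarrow> J \<subseteq> {..<n} \<and> indep a J" using invD(5)[OF inv] .
  from mcs_cases[OF I] show ?thesis
  proof (elim disjE bexE)
    fix J assume J1: "J \<in> set l" and IJ: "I = J \<union> (\<lambda>i. i+n) ` J"
    have Jn: "J \<subseteq> {..<n}" "indep a J" using J[OF J1] by auto
    have "I \<subseteq> {..<2*n+1}" using Jn IJ by auto
    moreover have "indep (madj n a) I" unfolding indep_def
    proof (intro ballI notI)
      fix x y assume xy: "x \<in> I" "y \<in> I" "madj n a x y"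
      have x: "x \<in> J \<or> (n \<le> x \<and> x - n \<in> J)" using xy(1) IJ by auto
      have y: "y \<in> J \<or> (n \<le> y \<and> y - n \<in> J)" using xy(2) IJ by auto
      show False using x y xy(3) Jn unfolding madj_def indep_def by auto
    qed
    ultimately show ?thesis ..
  next
    fix J assume J1: "J \<in> set l" and IJ: "I = insert (2*n) J"
    have Jn: "J \<subseteq> {..<n}" "indep a J" using J[OF J1] by auto
    have "I \<subseteq> {..<2*n+1}" using Jn IJ by auto
    moreover have "indep (madj n a) I" unfolding indep_def
    proof (intro ballI notI)
      fix x y assume xy: "x \<in> I" "y \<in> I" "madj n a x y"
      have x: "x \<in> J \<or> x = 2*n" using xy(1) IJ by auto
      have y: "y \<in> J \<or> y = 2*n" using xy(2) IJ by auto
      show False using x y xy(3) Jn unfolding madj_def indep_def by auto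
    qed
    ultimately show ?thesis ..
  next
    assume IJ: "I = {n..<2*n}"
    then show ?thesis unfolding indep_def madj_def by auto
  qed
qed


lemma myc_cnt:
  assumes inv: "minv n a w D l T" and v: "v < 2*n+1"
  shows "cnt (mcs n l (length l) T) v = T * length l"
proof -
  let ?m = "length l"
  have J: "\<And>J. J \<in> set l \<Longrightarrow> J \<subseteq> {..<n}" using invD(5)[OF inv] by blast
  have cT: "\<And>u. u < n \<Longrightarrow> cnt l u = T" using invD(6)[OF inv] .
  have Tm: "T \<le> ?m" using invD(9)[OF inv] .
  have ar: "(?m - T) * T + T * T = T * ?m" using Tm by (simp add: diff_mult_distrib algebra_simps)
  have f1: "\<And>I. I \<in> set l \<Longrightarrow> (v \<in> I \<union> (\<lambda>i. i+n) ` I) = (if v < n then v \<in> I else if v < 2*n then v-n \<in> I else False)"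
  proof -
    fix I assume "I \<in> set l"
    then have "I \<subseteq> {..<n}" by (rule J)
    then show "(v \<in> I \<union> (\<lambda>i. i+n) ` I) = (if v < n then v \<in> I else if v < 2*n then v-n \<in> I else False)"
      by (auto simp: image_iff) (metis add_diff_cancel_right' not_less le_add_diff_inverse2)+
  qed
  have f1': "filter (\<lambda>I. v \<in> I \<union> (\<lambda>i. i+n) ` I) l = filter (\<lambda>I. if v < n then v \<in> I else if v < 2*n then v-n \<in> I else False) l"
    using f1 by (rule filter_cong[OF refl])
  have c1: "cnt (map (\<lambda>I. I \<union> (\<lambda>i. i+n) ` I) l) v =
      (if v < n then cnt l v else if v < 2*n then cnt l (v-n) else 0)"
    unfolding cnt_map f1' by (simp add: cnt_def)
  have f2: "\<And>I. I \<in> set l \<Longrightarrow> (v \<in> insert (2*n) I) = (if v = 2*n then True else if v < n then v \<in> I else False)"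
  proof -
    fix I assume "I \<in> set l"
    then have "I \<subseteq> {..<n}" by (rule J)
    then show "(v \<in> insert (2*n) I) = (if v = 2*n then True else if v < n then v \<in> I else False)"
      by auto
  qed
  have f2': "filter (\<lambda>I. v \<in> insert (2*n) I) l = filter (\<lambda>I. if v = 2*n then True else if v < n then v \<in> I else False) l"
    using f2 by (rule filter_cong[OF refl])
  have c2: "cnt (map (insert (2*n)) l) v = (if v = 2*n then ?m else if v < n then cnt l v else 0)"
    unfolding cnt_map f2' by (simp add: cnt_def)
  show ?thesis
  proof (cases "v < n")
    case True
    then show ?thesis using c1 c2 cT ar by (simp add: mcs_def)
  next
    case False
    show ?thesis
    proof (cases "v < 2*n")
      case True
      then show ?thesis using False c1 c2 cT[of "v-n"] ar by (simp add: mcs_def)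
    next
      case F2: False
      then have "v = 2*n" using v by auto
      then show ?thesis using c1 c2 by (simp add: mcs_def)
    qed
  qed
qed

lemma myc_W:
  assumes inv: "minv n a w D l T"
  shows "sum (mw n w D (length l) T) {..<2*n+1} = length l * sum w {..<n} + T * D"
proof -
  let ?m = "length l"
  have Tm: "T \<le> ?m" using invD(9)[OF inv] .
  have "sum (mw n w D ?m T) {..<2*n+1} = (?m - T) * sum w {..<n} + T * sum w {..<n} + T * D"
    unfolding sum_split3 by (simp add: mw_def sum_distrib_left)
  also have "\<dots> = ?m * sum w {..<n} + T * D" using Tm by (simp add: diff_mult_distrib algebra_simps)
  finally show ?thesis .
qed

lemma myc_inv:
  assumes inv: "minv n a w D l T"
  shows "minv (2*n+1) (madj n a) (mw n w D (length l) T) (length l * D) (mcs n l (length l) T) (T * length l)"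
proof -
  let ?m = "length l"
  have Tm: "T \<le> ?m" "1 \<le> T" "1 \<le> D" using invD(8-10)[OF inv] by auto
  have WT: "sum w {..<n} * T = ?m * D" using invD(7)[OF inv] .
  have lm: "length (mcs n l ?m T) = ?m * ?m + T * T"
    unfolding length_mcs using Tm by (simp add: diff_mult_distrib algebra_simps)
  have e: "(?m * sum w {..<n} + T * D) * (T * ?m) = (?m * ?m + T * T) * (?m * D)"
  proof -
    have "(?m * sum w {..<n} + T * D) * (T * ?m) = ?m * ?m * (sum w {..<n} * T) + T * T * (?m * D)"
      by (simp add: algebra_simps)
    also have "\<dots> = (?m * ?m + T * T) * (?m * D)" unfolding WT by (simp add: algebra_simps)
    finally show ?thesis .
  qed
  have m1: "1 \<le> ?m" using Tm by auto
  show ?thesis unfolding minv_def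
  proof (intro conjI allI impI ballI)
    show "1 \<le> 2*n+1" by simp
  next
    fix x y assume "madj n a x y"
    then show "x < 2*n+1" "y < 2*n+1" "madj n a y x" "x \<noteq> y" using myc_adj[OF inv] by blast+
  next
    fix x y z show "\<not> (madj n a x y \<and> madj n a y z \<and> madj n a x z)" using myc_tri[OF inv] by blast
  next
    fix I assume "I \<subseteq> {..<2*n+1}" "indep (madj n a) I"
    then show "sum (mw n w D ?m T) I \<le> ?m * D" using myc_clique[OF inv] by blast
  next
    fix I assume "I \<in> set (mcs n l ?m T)"
    then show "I \<subseteq> {..<2*n+1}" "indep (madj n a) I" using myc_cs[OF inv] by blast+
  next
    fix v assume "v < 2*n+1"
    then show "cnt (mcs n l ?m T) v = T * ?m" using myc_cnt[OF inv] by blast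
  next
    show "sum (mw n w D ?m T) {..<2*n+1} * (T * ?m) = length (mcs n l ?m T) * (?m * D)"
      unfolding myc_W[OF inv] lm using e .
  next
    show "1 \<le> T * ?m" using Tm m1 by simp
  next
    show "T * ?m \<le> length (mcs n l ?m T)" unfolding lm using Tm by (simp add: le_add1 order_trans[OF mult_le_mono1])
  next
    show "1 \<le> ?m * D" using Tm m1 by simp
  qed
qed



datatype st = St (sn: nat) (sa: "nat \<Rightarrow> nat \<Rightarrow> bool") (sw: "nat \<Rightarrow> nat") (sD: nat) (sl: "nat set list") (sT: nat)

definition step :: "st \<Rightarrow> st" where
  "step s = St (2 * sn s + 1) (madj (sn s) (sa s)) (mw (sn s) (sw s) (sD s) (length (sl s)) (sT s))
     (length (sl s) * sD s) (mcs (sn s) (sl s) (length (sl s)) (sT s)) (sT s * length (sl s))"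

primrec lev :: "nat \<Rightarrow> st" where
  "lev 0 = St 1 (\<lambda>_ _. False) (\<lambda>_. 1) 1 [{0}] 1"
| "lev (Suc k) = step (lev k)"

definition sinv :: "st \<Rightarrow> bool" where
  "sinv s = minv (sn s) (sa s) (sw s) (sD s) (sl s) (sT s)"

definition sW :: "st \<Rightarrow> nat" where "sW s = sum (sw s) {..<sn s}"

lemma sinv_step: "sinv s \<Longrightarrow> sinv (step s)"
  unfolding sinv_def step_def using myc_inv[of "sn s" "sa s" "sw s" "sD s" "sl s" "sT s"] by simp

lemma sinv_base: "sinv (lev 0)"
proof -
  have "I \<subseteq> {..<Suc 0} \<Longrightarrow> card I \<le> Suc 0" for I :: "nat set"
    by (metis card_lessThan card_mono finite_lessThan)
  then show ?thesis unfolding sinv_def lev.simps st.sel minv_def by (auto simp: indep_def cnt_def)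
qed

lemma sinv_lev: "sinv (lev k)"
proof (induction k)
  case 0 show ?case by (rule sinv_base)
next
  case (Suc k) then show ?case by (simp add: sinv_step)
qed

lemma sW_step: "sinv s \<Longrightarrow> sW (step s) = length (sl s) * sW s + sT s * sD s"
  unfolding sW_def step_def sinv_def using myc_W[of "sn s" "sa s" "sw s" "sD s" "sl s" "sT s"] by simp

lemma sW_pos: "sinv s \<Longrightarrow> 1 \<le> sW s"
proof -
  assume h: "sinv s"
  have "sW s * sT s = length (sl s) * sD s" "1 \<le> sT s" "sT s \<le> length (sl s)" "1 \<le> sD s"
    using invD(7-10)[OF h[unfolded sinv_def]] unfolding sW_def by auto
  then show ?thesis by (metis One_nat_def less_one mult_is_0 not_less order_less_le_trans zero_less_one)
qed

lemma sW_mono: "sinv s \<Longrightarrow> sW s < sW (step s)"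
proof -
  assume h: "sinv s"
  have "1 \<le> sT s" "sT s \<le> length (sl s)" "1 \<le> sD s"
    using invD(8-10)[OF h[unfolded sinv_def]] by auto
  then have "sW s \<le> length (sl s) * sW s" "1 \<le> sT s * sD s" by simp_all
  then show ?thesis using sW_step[OF h] by linarith
qed

definition fr :: "st \<Rightarrow> real" where "fr s = real (sW s) / real (sD s)"

lemma fr_step: "sinv s \<Longrightarrow> fr (step s) = fr s + 1 / fr s"
proof -
  assume h: "sinv s"
  let ?m = "real (length (sl s))" and ?W = "real (sW s)" and ?D = "real (sD s)" and ?T = "real (sT s)"
  have WT: "?W * ?T = ?m * ?D" using invD(7)[OF h[unfolded sinv_def]] unfolding sW_def
    by (metis of_nat_mult)
  have pos: "?T \<ge> 1" "?D \<ge> 1" "?m \<ge> 1" "?W \<ge> 1"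
    using invD(8-10)[OF h[unfolded sinv_def]] sW_pos[OF h] by auto
  have ne: "sl s \<noteq> []" using invD(8-9)[OF h[unfolded sinv_def]] by auto
  have "fr (step s) = (?m * ?W + ?T * ?D) / (?m * ?D)"
    unfolding fr_def sW_step[OF h] by (simp add: step_def)
  also have "\<dots> = (?m * ?W) / (?m * ?D) + (?T * ?D) / (?m * ?D)" by (simp add: add_divide_distrib)
  also have "(?m * ?W) / (?m * ?D) = ?W / ?D" using pos ne by simp
  also have "(?T * ?D) / (?m * ?D) = ?T / ?m" using pos ne by simp
  also have "?T / ?m = ?D / ?W" using pos WT ne by (simp add: field_simps)
  finally show ?thesis unfolding fr_def by simp
qed

lemma fr_sq: "(fr (lev k))^2 \<ge> 2 * real k + 1"
proof (induction k)
  case 0 then show ?case by (simp add: fr_def sW_def)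
next
  case (Suc k)
  let ?f = "fr (lev k)"
  have "?f \<ge> 0" by (simp add: fr_def)
  moreover have "?f \<noteq> 0" using Suc.IH by auto
  ultimately have fpos: "?f > 0" by simp
  have "fr (lev (Suc k)) = ?f + 1/?f" using fr_step[OF sinv_lev[of k]] by simp
  then have e: "(fr (lev (Suc k)))^2 = ?f^2 + 2 + (1/?f)^2" using fpos by (simp add: power2_eq_square field_simps)
  have nn: "(1/?f)^2 \<ge> 0" by simp
  have "2 * real (Suc k) + 1 = (2*real k + 1) + 2" by simp
  then show ?case using e nn Suc.IH by linarith
qed



definition enc :: "nat \<times> nat \<Rightarrow> nat" where "enc p = Suc (prod_encode p)"

lemma inj_enc: "inj enc"
  unfolding enc_def by (metis injI inj_prod_encode nat.inject inj_eq)

definition L0 :: "st \<Rightarrow> (nat \<times> nat) set" where "L0 s = Sigma {..<sn s} (\<lambda>b. {..<sw s b})"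
definition Lset :: "st \<Rightarrow> nat set" where "Lset s = enc ` L0 s"
definition Rel :: "st \<Rightarrow> nat \<Rightarrow> nat \<Rightarrow> bool" where
  "Rel s x y = (\<exists>p\<in>L0 s. \<exists>q\<in>L0 s. x = enc p \<and> y = enc q \<and> sa s (fst p) (fst q))"

lemma card_Lset: "card (Lset s) = sW s"
proof -
  have "card (Lset s) = card (L0 s)" unfolding Lset_def
    using inj_enc by (simp add: card_image inj_on_subset)
  also have "\<dots> = sW s" unfolding L0_def sW_def by (simp add: card_SigmaI)
  finally show ?thesis .
qed

lemma Rel_enc: "Rel s (enc p) (enc q) \<longleftrightarrow> p \<in> L0 s \<and> q \<in> L0 s \<and> sa s (fst p) (fst q)"
  unfolding Rel_def using inj_enc by (auto dest: injD)

lemma gad: assumes h: "sinv s" shows "gadget 0 (Lset s) (Rel s) (sD s)"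
proof -
  note iv = h[unfolded sinv_def]
  have H: "\<And>x y. sa s x y \<Longrightarrow> x < sn s \<and> y < sn s \<and> sa s y x \<and> x \<noteq> y" using invD(2)[OF iv] .
  have Tr: "\<And>x y z. sa s x y \<Longrightarrow> sa s y z \<Longrightarrow> sa s x z \<Longrightarrow> False" using invD(3)[OF iv] .
  show ?thesis
  proof
    show "finite (Lset s)" unfolding Lset_def L0_def by simp
    show "0 \<notin> Lset s" unfolding Lset_def enc_def by auto
  next
    fix x y assume "Rel s x y"
    then show "x \<in> Lset s \<and> y \<in> Lset s" unfolding Rel_def Lset_def by auto
  next
    fix x y assume "Rel s x y"
    then show "Rel s y x" unfolding Rel_def using H by blast
  next
    fix x show "\<not> Rel s x x" unfolding Rel_def using H inj_enc by (auto dest: injD)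
  next
    fix x y z assume r: "Rel s x y" "Rel s y z" "Rel s x z"
    from r(1) obtain p q where pq: "x = enc p" "y = enc q" "sa s (fst p) (fst q)" unfolding Rel_def by auto
    from r(2) pq obtain t where t: "z = enc t" "sa s (fst q) (fst t)" unfolding Rel_enc Rel_def
      using inj_enc by (auto dest: injD)
    from r(3) pq t have "sa s (fst p) (fst t)" using Rel_enc by simp
    then show False using Tr pq t by blast
  next
    fix I assume I: "I \<subseteq> Lset s" "\<forall>x\<in>I. \<forall>y\<in>I. \<not> Rel s x y"
    define P where "P = {p \<in> L0 s. enc p \<in> I}"
    have IP: "I = enc ` P" using I(1) unfolding P_def Lset_def by auto
    have cI: "card I = card P" unfolding IP using inj_enc by (simp add: card_image inj_on_subset)
    have finP: "finite P" unfolding P_def L0_def by (rule finite_subset[of _ "Sigma {..<sn s} (\<lambda>b. {..<sw s b})"]) auto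
    have "P \<subseteq> Sigma (fst ` P) (\<lambda>b. {..<sw s b})" unfolding P_def L0_def by force
    then have "card P \<le> card (Sigma (fst ` P) (\<lambda>b. {..<sw s b}))"
      by (rule card_mono[rotated]) (use finP in auto)
    also have "\<dots> = sum (sw s) (fst ` P)" using finP by (simp add: card_SigmaI)
    also have "\<dots> \<le> sD s"
    proof (rule invD(4)[OF iv])
      show "fst ` P \<subseteq> {..<sn s}" unfolding P_def L0_def by auto
      show "indep (sa s) (fst ` P)" unfolding indep_def
      proof (intro ballI notI)
        fix b1 b2 assume b: "b1 \<in> fst ` P" "b2 \<in> fst ` P" "sa s b1 b2"
        then obtain p q where "p \<in> P" "q \<in> P" "b1 = fst p" "b2 = fst q" by auto
        then have "Rel s (enc p) (enc q)" using b(3) Rel_enc unfolding P_def by auto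
        then show False using I(2) \<open>p \<in> P\<close> \<open>q \<in> P\<close> unfolding P_def by auto
      qed
    qed
    finally show "card I \<le> sD s" using cI by simp
  qed
qed



definition Vg :: "st \<Rightarrow> nat set" where "Vg s = insert 0 (Lset s)"
definition Eg :: "st \<Rightarrow> nat set set" where "Eg s = gadget.EE 0 (Lset s) (Rel s)"

lemma Vg_card: "card (Vg s) = sW s + 1"
proof -
  have "0 \<notin> Lset s" unfolding Lset_def enc_def by auto
  moreover have "finite (Lset s)" unfolding Lset_def L0_def by simp
  ultimately show ?thesis unfolding Vg_def using card_Lset by simp
qed

lemma fr_ge3: "k \<ge> 4 \<Longrightarrow> fr (lev k) \<ge> 3"
proof -
  assume k: "k \<ge> 4"
  have "(fr (lev k))^2 \<ge> 9" using fr_sq[of k] k by linarith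
  moreover have "fr (lev k) \<ge> 0" by (simp add: fr_def)
  ultimately show ?thesis
  proof -
    assume a: "(fr (lev k))^2 \<ge> 9" "fr (lev k) \<ge> 0"
    show ?thesis
    proof (rule ccontr)
      assume "\<not> 3 \<le> fr (lev k)"
      then have "fr (lev k) < 3" by simp
      then have "(fr (lev k))^2 < 3^2" using a(2) by (rule power_strict_mono) simp
      then show False using a(1) by simp
    qed
  qed
qed

lemma key:
  assumes h: "sinv s" and f3: "fr s \<ge> 3"
  shows "simple_graph (Vg s) (Eg s)" "tau_star 3 (Eg s) > 0"
    "tau_star 2 (Eg s) / tau_star 3 (Eg s) - 3/4 \<le> (3/2) / (fr s - 2)"
proof -
  interpret g: gadget 0 "Lset s" "Rel s" "sD s" by (rule gad[OF h])
  show "simple_graph (Vg s) (Eg s)" unfolding Vg_def Eg_def by (rule g.simple)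
  let ?W = "real (sW s)" and ?D = "real (sD s)"
  have D1: "?D \<ge> 1" using invD(10)[OF h[unfolded sinv_def]] by simp
  have W3: "?W \<ge> 3 * ?D" using f3 D1 unfolding fr_def by (simp add: field_simps)
  have t2: "tau_star 2 (Eg s) \<le> ?W / 2" unfolding Eg_def using g.tau2_bound card_Lset by simp
  have t3: "2 * ?W - 4 * ?D \<le> 3 * tau_star 3 (Eg s)" unfolding Eg_def using g.tau3_bound card_Lset by simp
  have p: "2 * ?W - 4 * ?D > 0" using W3 D1 by linarith
  then show t3p: "tau_star 3 (Eg s) > 0" using t3 by linarith
  have "tau_star 2 (Eg s) / tau_star 3 (Eg s) \<le> (?W/2) / tau_star 3 (Eg s)"
    by (rule divide_right_mono) (use t2 t3p in auto)
  also have "\<dots> \<le> (?W/2) / ((2 * ?W - 4 * ?D)/3)"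
    using t3 p by (intro divide_left_mono) (auto simp: mult_pos_pos)
  also have "\<dots> = 3/4 + (3/2) / (fr s - 2)"
  proof -
    have "fr s - 2 = (?W - 2 * ?D) / ?D" unfolding fr_def using D1 by (simp add: field_simps)
    then have q: "(3/2) / (fr s - 2) = (3/2) * ?D / (?W - 2 * ?D)" using D1 by simp
    have "?W - 2 * ?D > 0" using p by linarith
    then have "(?W/2) / ((2 * ?W - 4 * ?D)/3) = 3/4 + (3/2) * ?D / (?W - 2 * ?D)"
      using D1 by (simp add: field_simps)
    then show ?thesis using q by simp
  qed
  finally show "tau_star 2 (Eg s) / tau_star 3 (Eg s) - 3/4 \<le> (3/2) / (fr s - 2)" by simp
qed

definition cc :: "nat \<Rightarrow> nat" where "cc i = card (Vg (lev (i+4)))"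
definition dd :: "nat \<Rightarrow> real" where
  "dd i = max 0 (tau_star 2 (Eg (lev (i+4))) / tau_star 3 (Eg (lev (i+4))) - 3/4)"
definition ee :: "nat \<Rightarrow> real" where
  "ee N = (if \<exists>i. cc i = N then dd (THE i. cc i = N) else 0)"

lemma cc_mono: "strict_mono cc"
proof -
  have "cc i < cc (Suc i)" for i
  proof -
    have e: "lev (Suc i + 4) = step (lev (i+4))" by (simp only: add_Suc lev.simps)
    have "sW (lev (i+4)) < sW (step (lev (i+4)))" by (rule sW_mono[OF sinv_lev])
    then show "cc i < cc (Suc i)" unfolding cc_def e Vg_card by simp
  qed
  then show ?thesis by (simp add: strict_mono_Suc_iff)
qed

lemma ee_cc: "ee (cc i) = dd i"
proof -
  have "(THE j. cc j = cc i) = i" using strict_mono_eq[OF cc_mono] by auto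
  then show ?thesis unfolding ee_def by auto
qed

lemma dd_bound: "dd i \<le> (3/2) / (fr (lev (i+4)) - 2)" "dd i \<ge> 0"
proof -
  have f3: "fr (lev (i+4)) \<ge> 3" by (rule fr_ge3) simp
  have "(3/2) / (fr (lev (i+4)) - 2) \<ge> 0" using f3 by simp
  then show "dd i \<le> (3/2) / (fr (lev (i+4)) - 2)" unfolding dd_def using key(3)[OF sinv_lev f3] by simp
  show "dd i \<ge> 0" unfolding dd_def by simp
qed

lemma ee_lim: "ee \<longlonglongrightarrow> 0"
proof (rule LIMSEQ_I)
  fix r :: real assume r: "r > 0"
  define B where "B = 2 + 3/(2*r)"
  define K where "K = nat \<lceil>B^2\<rceil>"
  have Bpos: "B > 2" unfolding B_def using r by simp
  have "\<forall>N\<ge>cc K. norm (ee N - 0) < r"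
  proof (intro allI impI)
    fix N assume N: "N \<ge> cc K"
    show "norm (ee N - 0) < r"
    proof (cases "\<exists>i. cc i = N")
      case False then show ?thesis unfolding ee_def using r by simp
    next
      case True
      then obtain i where i: "cc i = N" by blast
      have "i \<ge> K"
      proof (rule ccontr)
        assume "\<not> K \<le> i" then have "cc i < cc K" using cc_mono by (simp add: strict_mono_less)
        then show False using N i by simp
      qed
      let ?f = "fr (lev (i+4))"
      have f3: "?f \<ge> 3" by (rule fr_ge3) simp
      have "?f^2 \<ge> 2 * real (i+4) + 1" by (rule fr_sq)
      moreover have "real i \<ge> B^2" using \<open>i \<ge> K\<close> unfolding K_def by linarith
      ultimately have "?f^2 > B^2" by simp
      have "?f > B"
      proof (rule ccontr)
        assume "\<not> ?f > B" then have "?f \<le> B" by simp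
        then have "?f^2 \<le> B^2" using f3 by (intro power_mono) auto
        then show False using \<open>?f^2 > B^2\<close> by simp
      qed
      then have g: "?f - 2 > 3/(2*r)" unfolding B_def by simp
      have fp: "?f - 2 > 0" using f3 by simp
      have "r * (?f - 2) > r * (3/(2*r))" using g r by (rule mult_strict_left_mono)
      moreover have "r * (3/(2*r)) = 3/2" using r by simp
      ultimately have h: "3/2 < r * (?f - 2)" by simp
      have "(3/2) / (?f - 2) < r" unfolding pos_divide_less_eq[OF fp] by (rule h)
      then have "dd i < r" using dd_bound(1)[of i] by simp
      then show ?thesis using ee_cc[of i] i dd_bound(2)[of i] by simp
    qed
  qed
  then show "\<exists>no. \<forall>n\<ge>no. norm (ee n - 0) < r" by blast
qed

theorem claim4:
  shows "\<exists>(V :: nat \<Rightarrow> nat set) (E :: nat \<Rightarrow> nat set set) (\<epsilon> :: nat \<Rightarrow> real).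
           (\<forall>i. simple_graph (V i) (E i)) \<and>
           filterlim (\<lambda>i. card (V i)) at_top sequentially \<and>
           \<epsilon> \<longlonglongrightarrow> 0 \<and>
           (\<forall>i. tau_star 3 (E i) > 0 \<and>
                tau_star 2 (E i) \<le> (3/4 + \<epsilon> (card (V i))) * tau_star 3 (E i))"
proof (intro exI conjI allI)
  let ?V = "\<lambda>i. Vg (lev (i+4))" and ?E = "\<lambda>i. Eg (lev (i+4))"
  fix i
  have f3: "fr (lev (i+4)) \<ge> 3" by (rule fr_ge3) simp
  show "simple_graph (?V i) (?E i)" using key(1)[OF sinv_lev f3] .
  show t3: "tau_star 3 (?E i) > 0" using key(2)[OF sinv_lev f3] .
  have "tau_star 2 (?E i) / tau_star 3 (?E i) \<le> 3/4 + ee (card (?V i))"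
    using ee_cc[of i] unfolding cc_def dd_def by simp
  then show "tau_star 2 (?E i) \<le> (3/4 + ee (card (?V i))) * tau_star 3 (?E i)"
    using t3 by (simp add: divide_le_eq)
next
  show "filterlim (\<lambda>i. card (Vg (lev (i+4)))) at_top sequentially"
    using filterlim_subseq[OF cc_mono] unfolding cc_def by simp
next
  show "ee \<longlonglongrightarrow> 0" by (rule ee_lim)
qed

end
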